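(* For every positive integer $n$, \[ \sum_{k=1}^{n}(8k+1)\frac{(\tfrac{1}{2})_k(\tfrac{1}{4})_k(\tfrac{3}{4})_k}{k!^3}\frac{(\tfrac{1}{2}+n)_k(-n)_k}{(\tfrac{3}{2}+3n)_k(-3n)_k}\sum_{i=1}^{k}\left\{\frac{1}{(2i-1)^2}-\frac{1}{36i^2}\right\} =\frac{1}{9}\,\frac{(\tfrac{1}{2})_n^2(\tfrac{5}{6})_n(\tfrac{7}{6})_n}{n!^2(\tfrac{1}{3})_n(\tfrac{2}{3})_n}\sum_{j=1}^{2n}\frac{(-1)^{j-1}}{j^2}. \]
   Context: For a complex number $x$ and a nonnegative integer $n$, $(x)_n=x(x+1)\cdots(x+n-1)$ denotes the shifted factorial (Pochhammer symbol), with $(x)_0=1$. *)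

theory Defs
  imports Complex_Main
begin

end

theory Submission
  imports Defs
begin


definition "rho (n::real) (k::real) = (k-n-1)*(6*n+2*k+3)*(6*n+2*k+5)*(6*n+2*k+7)*(2*n+1)^2 / (16*(2*n+2*k+1)*(n+1)^2*(k-3*n-3)*(k-3*n-2)*(k-3*n-1))"
definition "sig (n::real) (k::real) = (8*k+9)*(2*k+1)*(4*k+1)*(4*k+3)*(2*n+2*k+3)*(k-n-1) / (32*(8*k+1)*(k+1)^3*(6*n+2*k+9)*(k-3*n-3))"
definition "R0 (n::real) (k::real) = 2*k^3*(4*n+3)*(6*n+7-12*(n+1)*k-4*k^2) / ((8*k+1)*(n+1)^2*(3*n+3-k)*(3*n+2-k)*(2*n+2*k+1))"
definition "R2 (n::real) (k::real) = k*((-42-176*n-274*n^2-188*n^3-48*n^4)+k*(72+312*n+504*n^2+360*n^3+96*n^4)+k^2*(66+172*n+136*n^2+32*n^3)+k^3*(-72-168*n-96*n^2)+k^4*(-24-32*n)) / (9*(8*k+1)*(n+1)^4*(3*n+3-k)*(3*n+2-k)*(2*n+2*k+1))"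
definition "hs (k::real) = (32*k^2+68*k+35) / (36*(2*k+1)^2*(k+1)^2)"
definition "dl (n::real) = (4*n+3) / (36*(2*n+1)^2*(n+1)^2)"

lemma id1:
  fixes n k :: real
  assumes nz: "(16::real) \<noteq> 0" "(2*n+2*k+1) \<noteq> 0" "(n+1) \<noteq> 0" "(k-3*n-3) \<noteq> 0" "(k-3*n-2) \<noteq> 0" "(k-3*n-1) \<noteq> 0" "(32::real) \<noteq> 0" "(8*k+1) \<noteq> 0" "(k+1) \<noteq> 0" "(6*n+2*k+9) \<noteq> 0" "(8*(k+1)+1) \<noteq> 0" "(3*n+3-(k+1)) \<noteq> 0" "(3*n+2-(k+1)) \<noteq> 0" "(2*n+2*(k+1)+1) \<noteq> 0" "(3*n+3-k) \<noteq> 0" "(3*n+2-k) \<noteq> 0" "(46656::real) \<noteq> 0"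
  shows "(1) + (- rho n k) + (- (sig n k * R0 n (k+1))) + (R0 n k) = 0"
proof -
  have Lnz: "46656*(2*n+2*k+1)*(n+1)^2*(k-3*n-3)*(k-3*n-2)*(k-3*n-1)*(8*k+1)*(k+1)^3*(6*n+2*k+9)*(8*(k+1)+1)*(2*n+2*(k+1)+1) \<noteq> 0" by (simp only: mult_eq_0_iff power_eq_0_iff nz simp_thms zero_less_numeral)
  have e0: "(1) * (46656*(2*n+2*k+1)*(n+1)^2*(k-3*n-3)*(k-3*n-2)*(k-3*n-1)*(8*k+1)*(k+1)^3*(6*n+2*k+9)*(8*(k+1)+1)*(2*n+2*(k+1)+1)) = (46656) * (1) * ((2*n+2*k+1)*(n+1)^2*(k-3*n-3)*(k-3*n-2)*(k-3*n-1)*(8*k+1)*(k+1)^3*(6*n+2*k+9)*(8*(k+1)+1)*(2*n+2*(k+1)+1))"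
    by algebra
  have e1: "(- rho n k) * (46656*(2*n+2*k+1)*(n+1)^2*(k-3*n-3)*(k-3*n-2)*(k-3*n-1)*(8*k+1)*(k+1)^3*(6*n+2*k+9)*(8*(k+1)+1)*(2*n+2*(k+1)+1)) = (-2916) * ((k-n-1)*(6*n+2*k+3)*(6*n+2*k+5)*(6*n+2*k+7)*(2*n+1)^2) * ((8*k+1)*(k+1)^3*(6*n+2*k+9)*(8*(k+1)+1)*(2*n+2*(k+1)+1))"
    unfolding rho_def sig_def R0_def R2_def hs_def dl_def
    apply (simp only: minus_divide_left times_divide_eq_left times_divide_eq_right divide_divide_eq_left divide_divide_eq_right)
    apply (subst nonzero_divide_eq_eq)
     apply (simp only: mult_eq_0_iff power_eq_0_iff nz simp_thms zero_less_numeral)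
    apply algebra
    done
  have e2: "(- (sig n k * R0 n (k+1))) * (46656*(2*n+2*k+1)*(n+1)^2*(k-3*n-3)*(k-3*n-2)*(k-3*n-1)*(8*k+1)*(k+1)^3*(6*n+2*k+9)*(8*(k+1)+1)*(2*n+2*(k+1)+1)) = (-1458) * ((8*k+9)*(2*k+1)*(4*k+1)*(4*k+3)*(2*n+2*k+3)*(k-n-1)*2*(k+1)^3*(4*n+3)*(6*n+7-12*(n+1)*(k+1)-4*(k+1)^2)) * ((2*n+2*k+1))"
    unfolding rho_def sig_def R0_def R2_def hs_def dl_def
    apply (simp only: minus_divide_left times_divide_eq_left times_divide_eq_right divide_divide_eq_left divide_divide_eq_right)
    apply (subst nonzero_divide_eq_eq)
     apply (simp only: mult_eq_0_iff power_eq_0_iff nz simp_thms zero_less_numeral)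
    apply algebra
    done
  have e3: "(R0 n k) * (46656*(2*n+2*k+1)*(n+1)^2*(k-3*n-3)*(k-3*n-2)*(k-3*n-1)*(8*k+1)*(k+1)^3*(6*n+2*k+9)*(8*(k+1)+1)*(2*n+2*(k+1)+1)) = (46656) * (2*k^3*(4*n+3)*(6*n+7-12*(n+1)*k-4*k^2)) * ((k-3*n-1)*(k+1)^3*(6*n+2*k+9)*(8*(k+1)+1)*(2*n+2*(k+1)+1))"
    unfolding rho_def sig_def R0_def R2_def hs_def dl_def
    apply (simp only: minus_divide_left times_divide_eq_left times_divide_eq_right divide_divide_eq_left divide_divide_eq_right)
    apply (subst nonzero_divide_eq_eq)
     apply (simp only: mult_eq_0_iff power_eq_0_iff nz simp_thms zero_less_numeral)
    apply algebra
    done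
  have s: "(46656) * (1) * ((2*n+2*k+1)*(n+1)^2*(k-3*n-3)*(k-3*n-2)*(k-3*n-1)*(8*k+1)*(k+1)^3*(6*n+2*k+9)*(8*(k+1)+1)*(2*n+2*(k+1)+1)) + (-2916) * ((k-n-1)*(6*n+2*k+3)*(6*n+2*k+5)*(6*n+2*k+7)*(2*n+1)^2) * ((8*k+1)*(k+1)^3*(6*n+2*k+9)*(8*(k+1)+1)*(2*n+2*(k+1)+1)) + (-1458) * ((8*k+9)*(2*k+1)*(4*k+1)*(4*k+3)*(2*n+2*k+3)*(k-n-1)*2*(k+1)^3*(4*n+3)*(6*n+7-12*(n+1)*(k+1)-4*(k+1)^2)) * ((2*n+2*k+1)) + (46656) * (2*k^3*(4*n+3)*(6*n+7-12*(n+1)*k-4*k^2)) * ((k-3*n-1)*(k+1)^3*(6*n+2*k+9)*(8*(k+1)+1)*(2*n+2*(k+1)+1)) = 0" by algebra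
  have "((1) + (- rho n k) + (- (sig n k * R0 n (k+1))) + (R0 n k)) * (46656*(2*n+2*k+1)*(n+1)^2*(k-3*n-3)*(k-3*n-2)*(k-3*n-1)*(8*k+1)*(k+1)^3*(6*n+2*k+9)*(8*(k+1)+1)*(2*n+2*(k+1)+1)) = 0" using s by (simp only: distrib_right e0 e1 e2 e3)
  then show ?thesis using Lnz by simp
qed

lemma id2:
  fixes n k :: real
  assumes nz: "(16::real) \<noteq> 0" "(2*n+2*k+1) \<noteq> 0" "(n+1) \<noteq> 0" "(k-3*n-3) \<noteq> 0" "(k-3*n-2) \<noteq> 0" "(k-3*n-1) \<noteq> 0" "(36::real) \<noteq> 0" "(2*n+1) \<noteq> 0" "(32::real) \<noteq> 0" "(8*k+1) \<noteq> 0" "(k+1) \<noteq> 0" "(6*n+2*k+9) \<noteq> 0" "(8*(k+1)+1) \<noteq> 0" "(3*n+3-(k+1)) \<noteq> 0" "(3*n+2-(k+1)) \<noteq> 0" "(2*n+2*(k+1)+1) \<noteq> 0" "(2*k+1) \<noteq> 0" "(9::real) \<noteq> 0" "(3*n+3-k) \<noteq> 0" "(3*n+2-k) \<noteq> 0" "(1679616::real) \<noteq> 0"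
  shows "(rho n k * dl n) + (sig n k * R0 n (k+1) * hs k) + (- (sig n k * R2 n (k+1) / 4)) + (R2 n k / 4) = 0"
proof -
  have Lnz: "1679616*(2*n+2*k+1)*(n+1)^4*(k-3*n-3)*(k-3*n-2)*(k-3*n-1)*(2*n+1)^2*(8*k+1)*(k+1)^5*(6*n+2*k+9)*(8*(k+1)+1)*(2*n+2*(k+1)+1)*(2*k+1)^2 \<noteq> 0" by (simp only: mult_eq_0_iff power_eq_0_iff nz simp_thms zero_less_numeral)
  have e0: "(rho n k * dl n) * (1679616*(2*n+2*k+1)*(n+1)^4*(k-3*n-3)*(k-3*n-2)*(k-3*n-1)*(2*n+1)^2*(8*k+1)*(k+1)^5*(6*n+2*k+9)*(8*(k+1)+1)*(2*n+2*(k+1)+1)*(2*k+1)^2) = (2916) * ((k-n-1)*(6*n+2*k+3)*(6*n+2*k+5)*(6*n+2*k+7)*(2*n+1)^2*(4*n+3)) * ((8*k+1)*(k+1)^5*(6*n+2*k+9)*(8*(k+1)+1)*(2*n+2*(k+1)+1)*(2*k+1)^2)"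
    unfolding rho_def sig_def R0_def R2_def hs_def dl_def
    apply (simp only: minus_divide_left times_divide_eq_left times_divide_eq_right divide_divide_eq_left divide_divide_eq_right)
    apply (subst nonzero_divide_eq_eq)
     apply (simp only: mult_eq_0_iff power_eq_0_iff nz simp_thms zero_less_numeral)
    apply algebra
    done
  have e1: "(sig n k * R0 n (k+1) * hs k) * (1679616*(2*n+2*k+1)*(n+1)^4*(k-3*n-3)*(k-3*n-2)*(k-3*n-1)*(2*n+1)^2*(8*k+1)*(k+1)^5*(6*n+2*k+9)*(8*(k+1)+1)*(2*n+2*(k+1)+1)*(2*k+1)^2) = (1458) * ((8*k+9)*(2*k+1)*(4*k+1)*(4*k+3)*(2*n+2*k+3)*(k-n-1)*2*(k+1)^3*(4*n+3)*(6*n+7-12*(n+1)*(k+1)-4*(k+1)^2)*(32*k^2+68*k+35)) * ((2*n+2*k+1)*(n+1)^2*(2*n+1)^2)"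
    unfolding rho_def sig_def R0_def R2_def hs_def dl_def
    apply (simp only: minus_divide_left times_divide_eq_left times_divide_eq_right divide_divide_eq_left divide_divide_eq_right)
    apply (subst nonzero_divide_eq_eq)
     apply (simp only: mult_eq_0_iff power_eq_0_iff nz simp_thms zero_less_numeral)
    apply algebra
    done
  have e2: "(- (sig n k * R2 n (k+1) / 4)) * (1679616*(2*n+2*k+1)*(n+1)^4*(k-3*n-3)*(k-3*n-2)*(k-3*n-1)*(2*n+1)^2*(8*k+1)*(k+1)^5*(6*n+2*k+9)*(8*(k+1)+1)*(2*n+2*(k+1)+1)*(2*k+1)^2) = (-1458) * ((8*k+9)*(2*k+1)*(4*k+1)*(4*k+3)*(2*n+2*k+3)*(k-n-1)*(k+1)*((-42-176*n-274*n^2-188*n^3-48*n^4)+(k+1)*(72+312*n+504*n^2+360*n^3+96*n^4)+(k+1)^2*(66+172*n+136*n^2+32*n^3)+(k+1)^3*(-72-168*n-96*n^2)+(k+1)^4*(-24-32*n))) * ((2*n+2*k+1)*(2*n+1)^2*(k+1)^2*(2*k+1)^2)"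
    unfolding rho_def sig_def R0_def R2_def hs_def dl_def
    apply (simp only: minus_divide_left times_divide_eq_left times_divide_eq_right divide_divide_eq_left divide_divide_eq_right)
    apply (subst nonzero_divide_eq_eq)
     apply (simp only: mult_eq_0_iff power_eq_0_iff nz simp_thms zero_less_numeral)
    apply algebra
    done
  have e3: "(R2 n k / 4) * (1679616*(2*n+2*k+1)*(n+1)^4*(k-3*n-3)*(k-3*n-2)*(k-3*n-1)*(2*n+1)^2*(8*k+1)*(k+1)^5*(6*n+2*k+9)*(8*(k+1)+1)*(2*n+2*(k+1)+1)*(2*k+1)^2) = (46656) * (k*((-42-176*n-274*n^2-188*n^3-48*n^4)+k*(72+312*n+504*n^2+360*n^3+96*n^4)+k^2*(66+172*n+136*n^2+32*n^3)+k^3*(-72-168*n-96*n^2)+k^4*(-24-32*n))) * ((k-3*n-1)*(2*n+1)^2*(k+1)^5*(6*n+2*k+9)*(8*(k+1)+1)*(2*n+2*(k+1)+1)*(2*k+1)^2)"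
    unfolding rho_def sig_def R0_def R2_def hs_def dl_def
    apply (simp only: minus_divide_left times_divide_eq_left times_divide_eq_right divide_divide_eq_left divide_divide_eq_right)
    apply (subst nonzero_divide_eq_eq)
     apply (simp only: mult_eq_0_iff power_eq_0_iff nz simp_thms zero_less_numeral)
    apply algebra
    done
  have s: "(2916) * ((k-n-1)*(6*n+2*k+3)*(6*n+2*k+5)*(6*n+2*k+7)*(2*n+1)^2*(4*n+3)) * ((8*k+1)*(k+1)^5*(6*n+2*k+9)*(8*(k+1)+1)*(2*n+2*(k+1)+1)*(2*k+1)^2) + (1458) * ((8*k+9)*(2*k+1)*(4*k+1)*(4*k+3)*(2*n+2*k+3)*(k-n-1)*2*(k+1)^3*(4*n+3)*(6*n+7-12*(n+1)*(k+1)-4*(k+1)^2)*(32*k^2+68*k+35)) * ((2*n+2*k+1)*(n+1)^2*(2*n+1)^2) + (-1458) * ((8*k+9)*(2*k+1)*(4*k+1)*(4*k+3)*(2*n+2*k+3)*(k-n-1)*(k+1)*((-42-176*n-274*n^2-188*n^3-48*n^4)+(k+1)*(72+312*n+504*n^2+360*n^3+96*n^4)+(k+1)^2*(66+172*n+136*n^2+32*n^3)+(k+1)^3*(-72-168*n-96*n^2)+(k+1)^4*(-24-32*n))) * ((2*n+2*k+1)*(2*n+1)^2*(k+1)^2*(2*k+1)^2) + (46656) * (k*((-42-176*n-274*n^2-188*n^3-48*n^4)+k*(72+312*n+504*n^2+360*n^3+96*n^4)+k^2*(66+172*n+136*n^2+32*n^3)+k^3*(-72-168*n-96*n^2)+k^4*(-24-32*n)))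 * ((k-3*n-1)*(2*n+1)^2*(k+1)^5*(6*n+2*k+9)*(8*(k+1)+1)*(2*n+2*(k+1)+1)*(2*k+1)^2) = 0" by algebra
  have "((rho n k * dl n) + (sig n k * R0 n (k+1) * hs k) + (- (sig n k * R2 n (k+1) / 4)) + (R2 n k / 4)) * (1679616*(2*n+2*k+1)*(n+1)^4*(k-3*n-3)*(k-3*n-2)*(k-3*n-1)*(2*n+1)^2*(8*k+1)*(k+1)^5*(6*n+2*k+9)*(8*(k+1)+1)*(2*n+2*(k+1)+1)*(2*k+1)^2) = 0" using s by (simp only: distrib_right e0 e1 e2 e3)
  then show ?thesis using Lnz by simp
qed



definition "gam (n::real) = (2*n+1)^2*(6*n+5)*(6*n+7)/(16*(n+1)^2*(3*n+1)*(3*n+2))"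

definition Ak :: "nat \<Rightarrow> real" where
  "Ak k = pochhammer (1/2) k * pochhammer (1/4) k * pochhammer (3/4) k / (fact k) ^ 3"
definition Bq :: "nat \<Rightarrow> nat \<Rightarrow> real" where
  "Bq n k = pochhammer (1/2 + real n) k * pochhammer (- real n) k
              / (pochhammer (3/2 + 3 * real n) k * pochhammer (- 3 * real n) k)"
definition Cc :: "nat \<Rightarrow> real" where
  "Cc n = (pochhammer (1/2) n) ^ 2 * pochhammer (5/6) n * pochhammer (7/6) n
                  / ((fact n) ^ 2 * pochhammer (1/3) n * pochhammer (2/3) n)"
definition Fw :: "nat \<Rightarrow> nat \<Rightarrow> real" where
  "Fw n k = (8 * real k + 1) * Ak k * Bq n k / Cc n"

lemma poch_shift: "pochhammer ((x::real)+1) k * x = pochhammer x k * (x + of_nat k)"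
  using pochhammer_rec[of x k] pochhammer_Suc[of x k] by (simp add: mult.commute)

lemma Cc_pos: "Cc n > 0"
  unfolding Cc_def by (intro divide_pos_pos mult_pos_pos zero_less_power pochhammer_pos) auto

lemma Cc_Suc: "Cc (Suc n) = Cc n * gam (real n)"
proof -
  have p: "pochhammer (1/2::real) n > 0" "pochhammer (5/6::real) n > 0" "pochhammer (7/6::real) n > 0"
     "pochhammer (1/3::real) n > 0" "pochhammer (2/3::real) n > 0" "(fact n::real) > 0"
    by (auto intro!: pochhammer_pos)
  have a: "pochhammer (1/2::real) n \<noteq> 0" "pochhammer (5/6::real) n \<noteq> 0" "pochhammer (7/6::real) n \<noteq> 0"
     "pochhammer (1/3::real) n \<noteq> 0" "pochhammer (2/3::real) n \<noteq> 0" "(fact n::real) \<noteq> 0"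
     "1/3 + real n \<noteq> 0" "2/3 + real n \<noteq> 0" "real n + 1 \<noteq> 0" "(16::real) \<noteq> 0" "3 * real n + 1 \<noteq> 0" "3 * real n + 2 \<noteq> 0"
    using p by auto
  show ?thesis unfolding Cc_def gam_def pochhammer_Suc fact_Suc
    apply (simp only: times_divide_eq_left times_divide_eq_right divide_divide_eq_left divide_divide_eq_right of_nat_mult of_nat_Suc)
    apply (subst frac_eq_eq)
    apply (simp only: mult_eq_0_iff power_eq_0_iff a simp_thms zero_less_numeral)
    apply (simp only: mult_eq_0_iff power_eq_0_iff a simp_thms zero_less_numeral)
    apply algebra done
qed

lemma Ak_Suc: "Ak (Suc k) = Ak k * ((2*real k+1)*(4*real k+1)*(4*real k+3)/(32*(real k+1)^3))"
proof -
  have p: "pochhammer (1/2::real) k > 0" "pochhammer (1/4::real) k > 0" "pochhammer (3/4::real) k > 0"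
     "(fact k::real) > 0"
    by (auto intro!: pochhammer_pos)
  show ?thesis unfolding Ak_def using p
    by (simp add: pochhammer_Suc field_simps) (simp add: algebra_simps power2_eq_square power3_eq_cube)
qed

lemma Bq_Suc: "Bq m (Suc k) = Bq m k * (((2*real m+2*real k+1)*(real k-real m)) / ((6*real m+2*real k+3)*(real k-3*real m)))"
proof -
  have 1: "Bq m (Suc k) = Bq m k * (((1/2+real m+real k)*(-real m+real k))/((3/2+3*real m+real k)*(- 3*real m+real k)))"
    unfolding Bq_def pochhammer_Suc times_divide_times_eq by (simp add: mult_ac)
  have 2: "((1/2+real m+real k)*(-real m+real k))/((3/2+3*real m+real k)*(- 3*real m+real k))
     = ((2*real m+2*real k+1)*(real k-real m)) / ((6*real m+2*real k+3)*(real k-3*real m))"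
  proof (cases "real k - 3 * real m = 0")
    case True then show ?thesis by simp
  next
    case False
    have a: "6*real m+2*real k+3 \<noteq> 0" "3/2+3*real m+real k \<noteq> 0" "- 3*real m+real k \<noteq> 0" "real k-3*real m \<noteq> 0" using False by linarith+
    show ?thesis
      apply (simp only: frac_eq_eq mult_eq_0_iff a simp_thms)
      apply algebra done
  qed
  show ?thesis by (simp only: 1 2)
qed


definition hh :: "nat \<Rightarrow> real" where
  "hh i = 1 / (2 * real i - 1) ^ 2 - 1 / (36 * (real i) ^ 2)"
definition HH :: "nat \<Rightarrow> real" where
  "HH k = (\<Sum>i=1..k. hh i)"
definition AA :: "nat \<Rightarrow> real" where
  "AA n = (\<Sum>j=1..2*n. (-1) ^ (j - 1) / (real j) ^ 2)"
definition Ew :: "nat \<Rightarrow> nat \<Rightarrow> real" where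
  "Ew n k = HH k - AA n / 9"

lemma HH_Suc: "HH (Suc k) = HH k + hs (real k)"
proof -
  have "hh (Suc k) = hs (real k)"
    unfolding hh_def hs_def
    by (simp add: field_simps) (simp add: algebra_simps power2_eq_square)
  then show ?thesis unfolding HH_def by simp
qed

lemma AA_Suc: "AA (Suc n) = AA n + 9 * dl (real n)"
proof -
  have e: "2 * Suc n = Suc (Suc (2*n))" by simp
  have "AA (Suc n) = AA n + (-1) ^ (2*n) / (real (2*n+1))^2 + (-1)^(2*n+1) / (real (2*n+2))^2"
    unfolding AA_def e by (simp add: add.commute)
  also have "\<dots> = AA n + 9 * dl (real n)"
    unfolding dl_def by (simp add: field_simps) algebra
  finally show ?thesis .
qed


lemma nzlin: "(x::real) \<noteq> 0 \<Longrightarrow> x \<noteq> 0" by simp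

lemma Fw_sig:
  assumes hk: "k \<le> Suc n"
  shows "Fw (Suc n) (Suc k) = Fw (Suc n) k * sig (real n) (real k)"
proof -
  have hk': "real k \<le> real n + 1" using hk by linarith
  have k0: "real k \<ge> 0" "real n \<ge> 0" by simp_all
  have c: "Cc (Suc n) > 0" by (rule Cc_pos)
  have "Fw (Suc n) (Suc k) = (8 * real (Suc k) + 1) * Ak (Suc k) * Bq (Suc n) (Suc k) / Cc (Suc n)"
    unfolding Fw_def ..
  also have "\<dots> = Fw (Suc n) k * sig (real n) (real k)"
    unfolding Ak_Suc Bq_Suc Fw_def sig_def
    apply (simp only: times_divide_eq_left times_divide_eq_right divide_divide_eq_left divide_divide_eq_right of_nat_Suc)
    apply (subst frac_eq_eq)
      apply (simp only: mult_eq_0_iff power_eq_0_iff zero_less_numeral simp_thms de_Morgan_disj, (intro conjI)?)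
      apply (use hk' c k0 in \<open>smt (verit)\<close>)+
      apply (simp only: mult_eq_0_iff power_eq_0_iff zero_less_numeral simp_thms de_Morgan_disj, (intro conjI)?)
      apply (use hk' c k0 in \<open>smt (verit)\<close>)+
    apply algebra
    done
  finally show ?thesis .
qed

lemma poch_shift3: "pochhammer ((x::real)+3) k * (x*(x+1)*(x+2)) = pochhammer x k * ((x + of_nat k)*(x+1+of_nat k)*(x+2+of_nat k))"
proof -
  have a: "pochhammer (x+1) k * x = pochhammer x k * (x + of_nat k)" by (rule poch_shift)
  have b: "pochhammer ((x+1)+1) k * (x+1) = pochhammer (x+1) k * (x + 1 + of_nat k)" by (rule poch_shift)
  have c: "pochhammer ((x+2)+1) k * (x+2) = pochhammer (x+2) k * (x + 2 + of_nat k)" by (rule poch_shift)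
  have b': "pochhammer (x+2) k * (x+1) = pochhammer (x+1) k * (x + 1 + of_nat k)" using b by (simp add: add.assoc)
  have c': "pochhammer (x+3) k * (x+2) = pochhammer (x+2) k * (x + 2 + of_nat k)" using c by (simp add: add.assoc)
  show ?thesis
    by (metis (no_types, lifting) a b' c' mult.assoc mult.left_commute)
qed

lemma Fw_rho:
  assumes hn: "n \<ge> 1" and hk: "k \<le> Suc n"
  shows "Fw n k = Fw (Suc n) k * rho (real n) (real k)"
proof -
  have hk': "real k \<le> real n + 1" and hn': "real n \<ge> 1" using hk hn by linarith+
  have k0: "real k \<ge> 0" by simp
  define a' where "a' = pochhammer (1/2 + real (Suc n)) k"
  define b' where "b' = pochhammer (- real (Suc n)) k"
  define c' where "c' = pochhammer (3/2 + 3 * real (Suc n)) k"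
  define d' where "d' = pochhammer (- 3 * real (Suc n)) k"
  have c'pos: "c' > 0" unfolding c'_def by (rule pochhammer_pos) simp
  have d'nz: "d' \<noteq> 0" unfolding d'_def pochhammer_eq_0_iff
  proof
    assume "\<exists>j<k. - 3 * real (Suc n) = - real j"
    then obtain j where j: "j < k" "- 3 * real (Suc n) = - real j" by blast
    have "real j = 3 * real n + 3" using j(2) by simp
    moreover have "real j < real k" using j(1) by simp
    ultimately show False using hk' hn' by linarith
  qed
  have p1: "pochhammer (1/2 + real n) k = a' * (2*real n+1) / (2*real n+2*real k+1)"
  proof -
    have "pochhammer (1/2 + real n + 1) k * (1/2 + real n) = pochhammer (1/2 + real n) k * (1/2 + real n + real k)"
      by (rule poch_shift)
    then have "a' * (2*real n+1) = pochhammer (1/2 + real n) k * (2*real n+2*real k+1)"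
      unfolding a'_def by (simp add: algebra_simps)
    then show ?thesis using hk' hn' by (simp add: nonzero_eq_divide_eq)
  qed
  have p2: "pochhammer (- real n) k = b' * (real k - real n - 1) / (- real n - 1)"
  proof -
    have e: "pochhammer ((- real n - 1) + 1) k * (- real n - 1) = pochhammer (- real n - 1) k * (- real n - 1 + real k)"
      by (rule poch_shift)
    have e1: "(- real n - 1) + 1 = - real n" by simp
    have e2: "- real n - 1 + real k = real k - real n - 1" by simp
    have e3: "- real (Suc n) = - real n - 1" by simp
    have "pochhammer (- real n) k * (- real n - 1) = b' * (real k - real n - 1)"
      using e unfolding e1 e2 b'_def e3 .
    moreover have "- real n - 1 \<noteq> 0" using hn' by simp
    ultimately show ?thesis by (simp add: nonzero_eq_divide_eq)
  qed
  have p3: "pochhammer (3/2 + 3 * real n) k = c' * ((6*real n+3)*(6*real n+5)*(6*real n+7)) / ((6*real n+2*real k+3)*(6*real n+2*real k+5)*(6*real n+2*real k+7))"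
  proof -
    have "pochhammer ((3/2 + 3 * real n)+3) k * ((3/2 + 3 * real n)*((3/2 + 3 * real n)+1)*((3/2 + 3 * real n)+2)) = pochhammer (3/2 + 3 * real n) k * (((3/2 + 3 * real n) + real k)*((3/2 + 3 * real n)+1+real k)*((3/2 + 3 * real n)+2+real k))"
      by (rule poch_shift3)
    then have "c' * ((6*real n+3)*(6*real n+5)*(6*real n+7)) = pochhammer (3/2 + 3 * real n) k * ((6*real n+2*real k+3)*(6*real n+2*real k+5)*(6*real n+2*real k+7))"
      unfolding c'_def by (simp add: algebra_simps)
    moreover have "(6*real n+2*real k+3)*(6*real n+2*real k+5)*(6*real n+2*real k+7) \<noteq> 0" using hn' by (simp add: mult_eq_0_iff; linarith)
    ultimately show ?thesis by (simp add: nonzero_eq_divide_eq)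
  qed
  have p4: "pochhammer (- 3 * real n) k = d' * ((real k - 3*real n-3)*(real k-3*real n-2)*(real k-3*real n-1)) / ((- 3*real n-3)*(- 3*real n-2)*(- 3*real n-1))"
  proof -
    have e: "pochhammer ((- 3 * real n - 3)+3) k * ((- 3 * real n - 3)*((- 3 * real n - 3)+1)*((- 3 * real n - 3)+2)) = pochhammer (- 3 * real n - 3) k * (((- 3 * real n - 3) + real k)*((- 3 * real n - 3)+1+real k)*((- 3 * real n - 3)+2+real k))"
      by (rule poch_shift3)
    have e1: "(- 3 * real n - 3)+3 = - 3 * real n" by simp
    have e2: "((- 3 * real n - 3)*((- 3 * real n - 3)+1)*((- 3 * real n - 3)+2)) = ((- 3*real n-3)*(- 3*real n-2)*(- 3*real n-1))" by algebra
    have e3: "(((- 3 * real n - 3) + real k)*((- 3 * real n - 3)+1+real k)*((- 3 * real n - 3)+2+real k)) = ((real k - 3*real n-3)*(real k-3*real n-2)*(real k-3*real n-1))" by algebra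
    have e4: "- 3 * real (Suc n) = - 3 * real n - 3" by simp
    have "pochhammer (- 3 * real n) k * ((- 3*real n-3)*(- 3*real n-2)*(- 3*real n-1)) = d' * ((real k - 3*real n-3)*(real k-3*real n-2)*(real k-3*real n-1))"
      using e unfolding e1 e2 e3 d'_def e4 .
    moreover have "(- 3*real n-3)*(- 3*real n-2)*(- 3*real n-1) \<noteq> 0" using hn' by (simp add: mult_eq_0_iff; linarith)
    ultimately show ?thesis by (simp add: nonzero_eq_divide_eq)
  qed
  have Fn: "Fw n k = (8 * real k + 1) * Ak k * ((a' * (2*real n+1) / (2*real n+2*real k+1)) * (b' * (real k - real n - 1) / (- real n - 1)) / ((c' * ((6*real n+3)*(6*real n+5)*(6*real n+7)) / ((6*real n+2*real k+3)*(6*real n+2*real k+5)*(6*real n+2*real k+7))) * (d' * ((real k - 3*real n-3)*(real k-3*real n-2)*(real k-3*real n-1)) / ((- 3*real n-3)*(- 3*real n-2)*(- 3*real n-1))))) / Cc n"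
    unfolding Fw_def Bq_def p1 p2 p3 p4 ..
  have FS: "Fw (Suc n) k = (8 * real k + 1) * Ak k * (a' * b' / (c' * d')) / (Cc n * gam (real n))"
    unfolding Fw_def Bq_def a'_def b'_def c'_def d'_def Cc_Suc ..
  have cn: "Cc n > 0" by (rule Cc_pos)
  show ?thesis
    unfolding Fn FS rho_def gam_def
    apply (simp only: times_divide_eq_left times_divide_eq_right divide_divide_eq_left divide_divide_eq_right)
    apply (subst frac_eq_eq)
      apply (simp only: mult_eq_0_iff power_eq_0_iff zero_less_numeral simp_thms de_Morgan_disj, (intro conjI)?)
      apply (rule d'nz | use hk' hn' cn c'pos k0 in \<open>smt (verit)\<close>)+
      apply (simp only: mult_eq_0_iff power_eq_0_iff zero_less_numeral simp_thms de_Morgan_disj, (intro conjI)?)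
      apply (rule d'nz | use hk' hn' cn c'pos k0 in \<open>smt (verit)\<close>)+
    apply algebra
    done
qed

definition Gw :: "nat \<Rightarrow> nat \<Rightarrow> real" where
  "Gw n k = Fw (Suc n) k * R0 (real n) (real k)"
definition G2 :: "nat \<Rightarrow> nat \<Rightarrow> real" where
  "G2 n k = Fw (Suc n) k * (R0 (real n) (real k) * Ew (Suc n) k - R2 (real n) (real k) / 4)"

lemma I1:
  assumes hn: "n \<ge> 1" and hk: "k \<le> Suc n"
  shows "1 + - rho (real n) (real k) + - (sig (real n) (real k) * R0 (real n) (real k + 1)) + R0 (real n) (real k) = 0"
proof -
  have hk': "real k \<le> real n + 1" and hn': "real n \<ge> 1" and k0: "real k \<ge> 0" using hk hn by linarith+
  show ?thesis apply (rule id1) apply (use hk' hn' k0 in \<open>smt (verit)\<close>)+ done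
qed

lemma I2:
  assumes hn: "n \<ge> 1" and hk: "k \<le> Suc n"
  shows "rho (real n) (real k) * dl (real n) + sig (real n) (real k) * R0 (real n) (real k + 1) * hs (real k) + - (sig (real n) (real k) * R2 (real n) (real k + 1) / 4) + R2 (real n) (real k) / 4 = 0"
proof -
  have hk': "real k \<le> real n + 1" and hn': "real n \<ge> 1" and k0: "real k \<ge> 0" using hk hn by linarith+
  show ?thesis apply (rule id2) apply (use hk' hn' k0 in \<open>smt (verit)\<close>)+ done
qed

lemma rSuc: "real (Suc k) = real k + 1" by simp

lemma wz1:
  assumes hn: "n \<ge> 1" and hk: "k \<le> Suc n"
  shows "Fw (Suc n) k - Fw n k = Gw n (Suc k) - Gw n k"
proof -
  have a: "Fw n k = Fw (Suc n) k * rho (real n) (real k)" by (rule Fw_rho[OF hn hk])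
  have b: "Gw n (Suc k) = Fw (Suc n) k * sig (real n) (real k) * R0 (real n) (real k + 1)"
    unfolding Gw_def Fw_sig[OF hk] rSuc ..
  have "Fw (Suc n) k - Fw n k - (Gw n (Suc k) - Gw n k) = Fw (Suc n) k * (1 + - rho (real n) (real k) + - (sig (real n) (real k) * R0 (real n) (real k + 1)) + R0 (real n) (real k))"
    apply (subst b) apply (simp only: a Gw_def) apply algebra done
  also have "\<dots> = 0" unfolding I1[OF hn hk] by simp
  finally show ?thesis by simp
qed

lemma Ew_n: "Ew n k = Ew (Suc n) k + dl (real n)"
  unfolding Ew_def AA_Suc by (simp add: field_simps)

lemma Ew_k: "Ew m (Suc k) = Ew m k + hs (real k)"
  unfolding Ew_def HH_Suc by simp

lemma wz2:
  assumes hn: "n \<ge> 1" and hk: "k \<le> Suc n"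
  shows "Fw (Suc n) k * Ew (Suc n) k - Fw n k * Ew n k = G2 n (Suc k) - G2 n k"
proof -
  have a: "Fw n k = Fw (Suc n) k * rho (real n) (real k)" by (rule Fw_rho[OF hn hk])
  have b: "G2 n (Suc k) = Fw (Suc n) k * sig (real n) (real k) * (R0 (real n) (real k + 1) * (Ew (Suc n) k + hs (real k)) - R2 (real n) (real k + 1) / 4)"
    unfolding G2_def Fw_sig[OF hk] rSuc Ew_k ..
  have "Fw (Suc n) k * Ew (Suc n) k - Fw n k * Ew n k - (G2 n (Suc k) - G2 n k)
     = Fw (Suc n) k * Ew (Suc n) k * (1 + - rho (real n) (real k) + - (sig (real n) (real k) * R0 (real n) (real k + 1)) + R0 (real n) (real k))
       - Fw (Suc n) k * (rho (real n) (real k) * dl (real n) + sig (real n) (real k) * R0 (real n) (real k + 1) * hs (real k) + - (sig (real n) (real k) * R2 (real n) (real k + 1) / 4) + R2 (real n) (real k) / 4)"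
    apply (subst b) apply (simp only: a G2_def Ew_n[of n k]) apply algebra done
  also have "\<dots> = 0" unfolding I1[OF hn hk] I2[OF hn hk] by simp
  finally show ?thesis by simp
qed

lemma Fw_top: "Fw n (Suc n) = 0"
proof -
  have "pochhammer (- real n) (Suc n) = 0" by (simp add: pochhammer_of_nat_eq_0_iff)
  then show ?thesis unfolding Fw_def Bq_def by simp
qed

lemma Gw_zero: "Gw n 0 = 0" "G2 n 0 = 0" "Gw n (Suc (Suc n)) = 0" "G2 n (Suc (Suc n)) = 0"
proof -
  show "Gw n 0 = 0" "G2 n 0 = 0" unfolding Gw_def G2_def R0_def R2_def by simp_all
  have "Fw (Suc n) (Suc (Suc n)) = 0" by (rule Fw_top)
  then show "Gw n (Suc (Suc n)) = 0" "G2 n (Suc (Suc n)) = 0" unfolding Gw_def G2_def by simp_all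
qed

lemma base1: "(\<Sum>k=0..1. Fw 1 k) = 1 \<and> (\<Sum>k=0..1. Fw 1 k * Ew 1 k) = 0"
proof -
  have H0: "HH 0 = 0" unfolding HH_def by simp
  have H1: "HH 1 = 35/36" using HH_Suc[of 0] H0 unfolding hs_def by simp
  have A0: "AA 0 = 0" unfolding AA_def by simp
  have A1: "AA 1 = 3/4" using AA_Suc[of 0] A0 unfolding dl_def by simp
  have C1: "Cc 1 = 35/32" unfolding Cc_def by (simp add: power2_eq_square)
  have F0: "Fw 1 0 = 32/35" unfolding Fw_def Ak_def Bq_def C1 by simp
  have F1: "Fw 1 1 = 3/35" unfolding Fw_def Ak_def Bq_def C1 by simp
  have s2: "\<And>f::nat\<Rightarrow>real. (\<Sum>k=0..1. f k) = f 0 + f 1" by (simp add: One_nat_def)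
  have r1: "Fw 1 0 + Fw 1 1 = 1" unfolding F0 F1 by simp
  have r2: "Fw 1 0 * Ew 1 0 + Fw 1 1 * Ew 1 1 = 0" unfolding F0 F1 Ew_def H0 H1 A1 by simp
  show ?thesis unfolding s2 using r1 r2 by blast
qed

lemma main_sums:
  assumes "n \<ge> 1"
  shows "(\<Sum>k=0..n. Fw n k) = 1 \<and> (\<Sum>k=0..n. Fw n k * Ew n k) = 0"
  using assms
proof (induction n rule: nat_induct_at_least)
  case base
  then show ?case using base1 by simp
next
  case (Suc n)
  have hn: "n \<ge> 1" by fact
  have s1: "(\<Sum>k=0..Suc n. Fw (Suc n) k) = (\<Sum>k=0..Suc n. Fw n k + (Gw n (Suc k) - Gw n k))"
    by (rule sum.cong) (auto simp: wz1[OF hn, symmetric])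
  also have "\<dots> = (\<Sum>k=0..Suc n. Fw n k) + (\<Sum>k=0..Suc n. Gw n (Suc k) - Gw n k)"
    by (rule sum.distrib)
  also have "\<dots> = (\<Sum>k=0..n. Fw n k) + (Gw n (Suc (Suc n)) - Gw n 0)"
    by (simp add: sum_Suc_diff Fw_top)
  also have "\<dots> = 1" using Suc.IH by (simp add: Gw_zero)
  finally have r1: "(\<Sum>k=0..Suc n. Fw (Suc n) k) = 1" .
  have s2: "(\<Sum>k=0..Suc n. Fw (Suc n) k * Ew (Suc n) k) = (\<Sum>k=0..Suc n. Fw n k * Ew n k + (G2 n (Suc k) - G2 n k))"
    by (rule sum.cong) (auto simp: wz2[OF hn, symmetric])
  also have "\<dots> = (\<Sum>k=0..Suc n. Fw n k * Ew n k) + (\<Sum>k=0..Suc n. G2 n (Suc k) - G2 n k)"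
    by (rule sum.distrib)
  also have "\<dots> = (\<Sum>k=0..n. Fw n k * Ew n k) + (G2 n (Suc (Suc n)) - G2 n 0)"
    by (simp add: sum_Suc_diff Fw_top)
  also have "\<dots> = 0" using Suc.IH by (simp add: Gw_zero)
  finally have r2: "(\<Sum>k=0..Suc n. Fw (Suc n) k * Ew (Suc n) k) = 0" .
  show ?case using r1 r2 by simp
qed

theorem mainTheorem8:
  fixes n :: nat
  assumes "n \<ge> 1"
  shows "(\<Sum>k=1..n. (8 * real k + 1)
           * (pochhammer (1/2) k * pochhammer (1/4) k * pochhammer (3/4) k / (fact k) ^ 3)
           * (pochhammer (1/2 + real n) k * pochhammer (- real n) k
              / (pochhammer (3/2 + 3 * real n) k * pochhammer (- 3 * real n) k))
           * (\<Sum>i=1..k. 1 / (2 * real i - 1) ^ 2 - 1 / (36 * (real i) ^ 2)))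
       = (1/9) * ((pochhammer (1/2) n) ^ 2 * pochhammer (5/6) n * pochhammer (7/6) n
                  / ((fact n) ^ 2 * pochhammer (1/3) n * pochhammer (2/3) n))
           * (\<Sum>j=1..2*n. (-1) ^ (j - 1) / (real j) ^ 2)"
proof -
  have S: "(\<Sum>k=0..n. Fw n k) = 1" "(\<Sum>k=0..n. Fw n k * Ew n k) = 0" using main_sums[OF assms] by auto
  have cn: "Cc n \<noteq> 0" using Cc_pos[of n] by simp
  have H0: "HH 0 = 0" unfolding HH_def by simp
  have L: "(\<Sum>k=1..n. (8 * real k + 1)
           * (pochhammer (1/2) k * pochhammer (1/4) k * pochhammer (3/4) k / (fact k) ^ 3)
           * (pochhammer (1/2 + real n) k * pochhammer (- real n) k
              / (pochhammer (3/2 + 3 * real n) k * pochhammer (- 3 * real n) k))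
           * (\<Sum>i=1..k. 1 / (2 * real i - 1) ^ 2 - 1 / (36 * (real i) ^ 2)))
        = (\<Sum>k=1..n. (8 * real k + 1) * Ak k * Bq n k * HH k)"
    unfolding Ak_def Bq_def HH_def hh_def ..
  have L2: "(\<Sum>k=1..n. (8 * real k + 1) * Ak k * Bq n k * HH k) = (\<Sum>k=0..n. (8 * real k + 1) * Ak k * Bq n k * HH k)"
  proof -
    have "(\<Sum>k=0..n. (8 * real k + 1) * Ak k * Bq n k * HH k) = (8 * real 0 + 1) * Ak 0 * Bq n 0 * HH 0 + (\<Sum>k=Suc 0..n. (8 * real k + 1) * Ak k * Bq n k * HH k)"
      by (rule sum.atLeast_Suc_atMost) simp
    then show ?thesis using H0 by simp
  qed
  also have "\<dots> = (\<Sum>k=0..n. Cc n * (Fw n k * Ew n k) + (Cc n * AA n / 9) * Fw n k)"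
    by (rule sum.cong) (simp_all add: Fw_def Ew_def cn field_simps)
  also have "\<dots> = Cc n * (\<Sum>k=0..n. Fw n k * Ew n k) + (Cc n * AA n / 9) * (\<Sum>k=0..n. Fw n k)"
    by (simp add: sum.distrib sum_distrib_left)
  also have "\<dots> = (1/9) * Cc n * AA n" using S by simp
  finally show ?thesis unfolding L Cc_def AA_def .
qed

end
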